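(* Let $\{x_n\}\subset X$, $\{y_n\}\subset X^{\ast}$ form a cross-frame in the Banach space $X$, with synthesis operator $S:X_d\to X$, analysis operator $\widetilde R:X\to X_d$, and $N=\operatorname{Ker}(S)$. Let $B:X\to X$ be an operator. Then there exists an operator $A:X_d\to X_d$ with $SA=BS$, and the operators $A:X_d\to X_d$ satisfying $SA=BS$ are exactly those of the form $$A=\widetilde R B S+A_0,$$ where $A_0:X_d\to X_d$ is an arbitrary operator with $A_0(X_d)\subset N$.
   Context: $X$ is a Banach space, $X^{\ast}$ its dual, and $(x,y)$ denotes the value of $y\in X^{\ast}$ at $x\in X$. $X_d$ is a Banach space of scalar sequences $a=\{a_n\}$ in which the unit vectors $\varepsilon_n=\{\delta_{nj}\}_j$ form a basis; its dual $X_d^{\ast}$ is identified with a space of sequences via $b\mapsto\{b(\varepsilon_n)\}$, and it is assumed that the coordinate functionals $\{\varepsilon_n^{\ast}\}$ form a basis of $X_d^{\ast}$. A sequence $\{y_n\}\subset X^{\ast}$ is a frame if there are $A,B>0$ such that $\{(x,y_n)\}\in X_d$ and $A\|x\|_X\le \|\{(x,y_n)\}\|_{X_d}\le B\|x\|_X$ for all $x\in X$. A sequence $\{x_n\}\subset X$ is a co-frame if $\{(x_n,y)\}\in X_d^{\ast}$ for all $y\in X^{\ast}$ and there are $\tilde A,\tilde B>0$ with $\tilde A\|y\|_{X^{\ast}}\le \|\{(x_n,y)\}\|_{X_d^{\ast}}\le \tilde B\|y\|_{X^{\ast}}$ for all $y\in X^{\ast}$. A co-frame $\{x_n\}$ and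 a frame $\{y_n\}$ form a cross-frame if $x=\sum_n (x,y_n)x_n$ for all $x\in X$ and $y=\sum_n (x_n,y)y_n$ for all $y\in X^{\ast}$. The synthesis operator is the bounded linear operator $S:X_d\to X$, $Sa=\sum_n a_nx_n$; the analysis operator is $\widetilde R:X\to X_d$, $\widetilde Rx=\{(x,y_n)\}_n$. $N=\operatorname{Ker}S$ is the space of coefficient sequences of null series $\sum a_nx_n=0$. Operators are linear maps. *)

theory Defs
  imports "HOL-Analysis.Analysis"
begin

definition unitv :: "nat \<Rightarrow> nat \<Rightarrow> real" where
  "unitv n = (\<lambda>j. if j = n then 1 else 0)"

definition seq_banach :: "(nat \<Rightarrow> real) set \<Rightarrow> ((nat \<Rightarrow> real) \<Rightarrow> real) \<Rightarrow> bool" where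
  "seq_banach D nd \<longleftrightarrow>
     (\<lambda>n. 0) \<in> D \<and>
     (\<forall>a\<in>D. \<forall>b\<in>D. (\<lambda>n. a n + b n) \<in> D) \<and>
     (\<forall>a\<in>D. \<forall>c. (\<lambda>n. c * a n) \<in> D) \<and>
     (\<forall>a\<in>D. 0 \<le> nd a) \<and>
     (\<forall>a\<in>D. nd a = 0 \<longleftrightarrow> a = (\<lambda>n. 0)) \<and>
     (\<forall>a\<in>D. \<forall>c. nd (\<lambda>n. c * a n) = \<bar>c\<bar> * nd a) \<and>
     (\<forall>a\<in>D. \<forall>b\<in>D. nd (\<lambda>n. a n + b n) \<le> nd a + nd b) \<and>
     (\<forall>f. (\<forall>k. f k \<in> D) \<and>
          (\<forall>e>0. \<exists>M. \<forall>m\<ge>M. \<forall>k\<ge>M. nd (\<lambda>n. f m n - f k n) < e)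
          \<longrightarrow> (\<exists>a\<in>D. (\<lambda>k. nd (\<lambda>n. f k n - a n)) \<longlonglongrightarrow> 0))"

definition unit_basis :: "(nat \<Rightarrow> real) set \<Rightarrow> ((nat \<Rightarrow> real) \<Rightarrow> real) \<Rightarrow> bool" where
  "unit_basis D nd \<longleftrightarrow> (\<forall>n. unitv n \<in> D) \<and>
     (\<forall>a\<in>D. (\<lambda>N. nd (\<lambda>n. a n - (\<Sum>k<N. a k * unitv k n))) \<longlonglongrightarrow> 0)"

definition dual_fun :: "(nat \<Rightarrow> real) set \<Rightarrow> ((nat \<Rightarrow> real) \<Rightarrow> real) \<Rightarrow> ((nat \<Rightarrow> real) \<Rightarrow> real) \<Rightarrow> bool" where
  "dual_fun D nd b \<longleftrightarrow>
     (\<forall>a\<in>D. \<forall>a'\<in>D. b (\<lambda>n. a n + a' n) = b a + b a') \<and>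
     (\<forall>a\<in>D. \<forall>c. b (\<lambda>n. c * a n) = c * b a) \<and>
     (\<exists>K. \<forall>a\<in>D. \<bar>b a\<bar> \<le> K * nd a)"

definition dual_norm :: "(nat \<Rightarrow> real) set \<Rightarrow> ((nat \<Rightarrow> real) \<Rightarrow> real) \<Rightarrow> ((nat \<Rightarrow> real) \<Rightarrow> real) \<Rightarrow> real" where
  "dual_norm D nd b = Sup {\<bar>b a\<bar> | a. a \<in> D \<and> nd a \<le> 1}"

text \<open>X_d^* identified with the sequences {b(epsilon_n)}.\<close>
definition dual_seqs :: "(nat \<Rightarrow> real) set \<Rightarrow> ((nat \<Rightarrow> real) \<Rightarrow> real) \<Rightarrow> (nat \<Rightarrow> real) set" where
  "dual_seqs D nd = {\<beta>. \<exists>b. dual_fun D nd b \<and> (\<forall>n. \<beta> n = b (unitv n))}"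

definition dual_seq_norm :: "(nat \<Rightarrow> real) set \<Rightarrow> ((nat \<Rightarrow> real) \<Rightarrow> real) \<Rightarrow> (nat \<Rightarrow> real) \<Rightarrow> real" where
  "dual_seq_norm D nd \<beta> =
     dual_norm D nd (SOME b. dual_fun D nd b \<and> (\<forall>n. \<beta> n = b (unitv n)))"

definition coord_dual_basis :: "(nat \<Rightarrow> real) set \<Rightarrow> ((nat \<Rightarrow> real) \<Rightarrow> real) \<Rightarrow> bool" where
  "coord_dual_basis D nd \<longleftrightarrow>
     (\<forall>b. dual_fun D nd b \<longrightarrow>
        (\<lambda>N. dual_norm D nd (\<lambda>a. b a - (\<Sum>k<N. b (unitv k) * a k))) \<longlonglongrightarrow> 0)"

definition is_frame :: "(nat \<Rightarrow> real) set \<Rightarrow> ((nat \<Rightarrow> real) \<Rightarrow> real) \<Rightarrow> (nat \<Rightarrow> ('a::real_normed_vector \<Rightarrow>\<^sub>L real)) \<Rightarrow> bool" where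
  "is_frame D nd ys \<longleftrightarrow> (\<forall>x. (\<lambda>n. blinfun_apply (ys n) x) \<in> D) \<and>
     (\<exists>A B. A > 0 \<and> B > 0 \<and> (\<forall>x. A * norm x \<le> nd (\<lambda>n. blinfun_apply (ys n) x)
                                  \<and> nd (\<lambda>n. blinfun_apply (ys n) x) \<le> B * norm x))"

definition is_coframe :: "(nat \<Rightarrow> real) set \<Rightarrow> ((nat \<Rightarrow> real) \<Rightarrow> real) \<Rightarrow> (nat \<Rightarrow> 'a::real_normed_vector) \<Rightarrow> bool" where
  "is_coframe D nd xs \<longleftrightarrow>
     (\<forall>y::'a \<Rightarrow>\<^sub>L real. (\<lambda>n. blinfun_apply y (xs n)) \<in> dual_seqs D nd) \<and>
     (\<exists>A B. A > 0 \<and> B > 0 \<and> (\<forall>y::'a \<Rightarrow>\<^sub>L real.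
         A * norm y \<le> dual_seq_norm D nd (\<lambda>n. blinfun_apply y (xs n)) \<and>
         dual_seq_norm D nd (\<lambda>n. blinfun_apply y (xs n)) \<le> B * norm y))"

definition is_cross_frame :: "(nat \<Rightarrow> real) set \<Rightarrow> ((nat \<Rightarrow> real) \<Rightarrow> real) \<Rightarrow> (nat \<Rightarrow> 'a::real_normed_vector) \<Rightarrow> (nat \<Rightarrow> ('a \<Rightarrow>\<^sub>L real)) \<Rightarrow> bool" where
  "is_cross_frame D nd xs ys \<longleftrightarrow> is_coframe D nd xs \<and> is_frame D nd ys \<and>
     (\<forall>x. (\<lambda>n. blinfun_apply (ys n) x *\<^sub>R xs n) sums x) \<and>
     (\<forall>y::'a \<Rightarrow>\<^sub>L real. (\<lambda>n. blinfun_apply y (xs n) *\<^sub>R ys n) sums y)"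

definition synth :: "(nat \<Rightarrow> 'a::real_normed_vector) \<Rightarrow> (nat \<Rightarrow> real) \<Rightarrow> 'a" where
  "synth xs a = (\<Sum>n. a n *\<^sub>R xs n)"

definition analysis :: "(nat \<Rightarrow> ('a::real_normed_vector \<Rightarrow>\<^sub>L real)) \<Rightarrow> 'a \<Rightarrow> nat \<Rightarrow> real" where
  "analysis ys x = (\<lambda>n. blinfun_apply (ys n) x)"

definition seq_op :: "(nat \<Rightarrow> real) set \<Rightarrow> ((nat \<Rightarrow> real) \<Rightarrow> (nat \<Rightarrow> real)) \<Rightarrow> bool" where
  "seq_op D A \<longleftrightarrow> (\<forall>a\<in>D. A a \<in> D) \<and>
     (\<forall>a\<in>D. \<forall>a'\<in>D. A (\<lambda>n. a n + a' n) = (\<lambda>n. A a n + A a' n)) \<and>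
     (\<forall>a\<in>D. \<forall>c. A (\<lambda>n. c * a n) = (\<lambda>n. c * A a n))"

end

theory Submission
  imports Defs
begin

theorem theorem10:
  fixes D :: "(nat \<Rightarrow> real) set" and nd :: "(nat \<Rightarrow> real) \<Rightarrow> real"
    and xs :: "nat \<Rightarrow> 'a::banach" and ys :: "nat \<Rightarrow> ('a \<Rightarrow>\<^sub>L real)"
    and B :: "'a \<Rightarrow> 'a"
  assumes Xd: "seq_banach D nd" and basis: "unit_basis D nd"
    and dbasis: "coord_dual_basis D nd"
    and cross: "is_cross_frame D nd xs ys"
    and S_def: "\<forall>a\<in>D. summable (\<lambda>n. a n *\<^sub>R xs n)"
    and B_lin: "linear B"
  shows "(\<exists>A. seq_op D A \<and> (\<forall>a\<in>D. synth xs (A a) = B (synth xs a))) \<and>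
         (\<forall>A. seq_op D A \<longrightarrow>
            ((\<forall>a\<in>D. synth xs (A a) = B (synth xs a)) \<longleftrightarrow>
             (\<exists>A0. seq_op D A0 \<and> (\<forall>a\<in>D. synth xs (A0 a) = 0) \<and>
                   (\<forall>a\<in>D. A a = (\<lambda>n. analysis ys (B (synth xs a)) n + A0 a n)))))"
proof -
  have Dadd: "\<And>a b. a \<in> D \<Longrightarrow> b \<in> D \<Longrightarrow> (\<lambda>n. a n + b n) \<in> D"
    using Xd unfolding seq_banach_def by blast
  have Dmul: "\<And>a c. a \<in> D \<Longrightarrow> (\<lambda>n. c * a n) \<in> D"
    using Xd unfolding seq_banach_def by blast
  have Ddiff: "\<And>a b. a \<in> D \<Longrightarrow> b \<in> D \<Longrightarrow> (\<lambda>n. a n - b n) \<in> D"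
  proof -
    fix a b assume "a \<in> D" "b \<in> D"
    then have "(\<lambda>n. a n + (-1) * b n) \<in> D" using Dadd Dmul by blast
    then show "(\<lambda>n. a n - b n) \<in> D" by simp
  qed
  have Ra: "\<And>x. analysis ys x \<in> D"
    using cross unfolding is_cross_frame_def is_frame_def analysis_def by blast
  have SR: "\<And>x. synth xs (analysis ys x) = x"
    using cross unfolding is_cross_frame_def synth_def analysis_def
    by (metis sums_unique)
  have Sadd: "\<And>a b. a \<in> D \<Longrightarrow> b \<in> D \<Longrightarrow> synth xs (\<lambda>n. a n + b n) = synth xs a + synth xs b"
    unfolding synth_def using S_def by (simp add: suminf_add scaleR_add_left)
  have Sdiff: "\<And>a b. a \<in> D \<Longrightarrow> b \<in> D \<Longrightarrow> synth xs (\<lambda>n. a n - b n) = synth xs a - synth xs b"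
    unfolding synth_def using S_def by (simp add: suminf_diff scaleR_diff_left)
  have Smul: "\<And>a c. a \<in> D \<Longrightarrow> synth xs (\<lambda>n. c * a n) = c *\<^sub>R synth xs a"
  proof -
    fix a c assume "a \<in> D"
    then have "summable (\<lambda>n. a n *\<^sub>R xs n)" using S_def by blast
    then have "(\<Sum>n. c *\<^sub>R (a n *\<^sub>R xs n)) = c *\<^sub>R (\<Sum>n. a n *\<^sub>R xs n)"
      using suminf_scaleR_right[of "\<lambda>n. a n *\<^sub>R xs n" c] by simp
    then show "synth xs (\<lambda>n. c * a n) = c *\<^sub>R synth xs a" unfolding synth_def by simp
  qed
  define R where "R = (\<lambda>a. analysis ys (B (synth xs a)))"
  have Radd: "\<And>a b. a \<in> D \<Longrightarrow> b \<in> D \<Longrightarrow> R (\<lambda>n. a n + b n) = (\<lambda>n. R a n + R b n)"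
    unfolding R_def analysis_def using Sadd B_lin
    by (simp add: linear_add blinfun.add_right)
  have Rmul: "\<And>a c. a \<in> D \<Longrightarrow> R (\<lambda>n. c * a n) = (\<lambda>n. c * R a n)"
    unfolding R_def analysis_def using Smul B_lin
    by (simp add: linear_scale blinfun.scaleR_right)
  have Rop: "seq_op D R" unfolding seq_op_def using Ra Radd Rmul R_def by auto
  have RS: "\<And>a. synth xs (R a) = B (synth xs a)" unfolding R_def using SR by simp
  show ?thesis
  proof (intro conjI allI impI iffI)
    show "\<exists>A. seq_op D A \<and> (\<forall>a\<in>D. synth xs (A a) = B (synth xs a))"
      using Rop RS by blast
  next
    fix A assume Aop: "seq_op D A" and H: "\<forall>a\<in>D. synth xs (A a) = B (synth xs a)"
    have AD: "\<And>a. a \<in> D \<Longrightarrow> A a \<in> D" using Aop unfolding seq_op_def by blast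
    have Aadd: "\<And>a b. a \<in> D \<Longrightarrow> b \<in> D \<Longrightarrow> A (\<lambda>n. a n + b n) = (\<lambda>n. A a n + A b n)"
      using Aop unfolding seq_op_def by blast
    have Amul: "\<And>a c. a \<in> D \<Longrightarrow> A (\<lambda>n. c * a n) = (\<lambda>n. c * A a n)"
      using Aop unfolding seq_op_def by blast
    define A0 where "A0 = (\<lambda>a n. A a n - R a n)"
    have "seq_op D A0" unfolding seq_op_def A0_def
      using AD Ra R_def Ddiff Aadd Radd Amul Rmul by (auto simp: algebra_simps)
    moreover have "\<forall>a\<in>D. synth xs (A0 a) = 0"
      unfolding A0_def using Sdiff AD Ra R_def H RS by simp
    moreover have "\<forall>a\<in>D. A a = (\<lambda>n. analysis ys (B (synth xs a)) n + A0 a n)"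
      unfolding A0_def R_def by simp
    ultimately show "\<exists>A0. seq_op D A0 \<and> (\<forall>a\<in>D. synth xs (A0 a) = 0) \<and>
                   (\<forall>a\<in>D. A a = (\<lambda>n. analysis ys (B (synth xs a)) n + A0 a n))" by blast
  next
    fix A assume Aop: "seq_op D A" and
      H: "\<exists>A0. seq_op D A0 \<and> (\<forall>a\<in>D. synth xs (A0 a) = 0) \<and>
                   (\<forall>a\<in>D. A a = (\<lambda>n. analysis ys (B (synth xs a)) n + A0 a n))"
    then obtain A0 where A0: "seq_op D A0" "\<forall>a\<in>D. synth xs (A0 a) = 0"
      "\<forall>a\<in>D. A a = (\<lambda>n. R a n + A0 a n)" unfolding R_def by blast
    have A0D: "\<And>a. a \<in> D \<Longrightarrow> A0 a \<in> D" using A0(1) unfolding seq_op_def by blast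
    show "\<forall>a\<in>D. synth xs (A a) = B (synth xs a)"
    proof
      fix a assume a: "a \<in> D"
      have "synth xs (A a) = synth xs (R a) + synth xs (A0 a)"
        using A0(3) a Sadd A0D Ra R_def by simp
      then show "synth xs (A a) = B (synth xs a)" using A0(2) a RS by simp
    qed
  qed
qed

end
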